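(* For any digraph $G$ and any field $\mathbb F$, $\rho(G)=h_1^{\rm twist}(\underline{\mathbb F})$, where $\underline{\mathbb F}$ is the structure sheaf of $G$.
   Context: A digraph $G$ has finite vertex set $V_G$, edge set $E_G$, and tail/head maps $t_G,h_G\colon E_G\to V_G$ (multiple edges and loops allowed). The structure sheaf $\underline{\mathbb F}$ assigns $\mathbb F$ to every vertex and edge, with all restriction maps the identity. For a sheaf $\mathcal F$ (values $\mathcal F(P)$, restriction maps $\mathcal F(t,e)\colon\mathcal F(e)\to\mathcal F(t_Ge)$, $\mathcal F(h,e)\colon\mathcal F(e)\to\mathcal F(h_Ge)$), let $\psi(e)$, $e\in E_G$, be independent indeterminates and $\mathcal F^\psi$ the sheaf of $\mathbb F(\psi)$-spaces with values $\mathcal F(P)\otimes\mathbb F(\psi)$, head maps $\mathcal F(h,e)$, tail maps $\psi(e)\mathcal F(t,e)$; $h_1^{\rm twist}(\mathcal F)$ is the $\mathbb F(\psi)$-dimension of the kernel of $d=d_h-d_t\colon\bigoplus_e\mathcal F^\psi(e)\to\bigoplus_v\mathcal F^\psi(v)$, where $d_h$ (resp. $d_t$) sends the summand of $e$ to that of $h_Ge$ (resp. $t_Ge$) via the head (resp. tail) map. Regarding $G$ as undirected, for a connected component $X$ let $h_1(X)=|E_X|-|V_X|+1$, and $\rho(G)=\sum_X\max(0,h_1(X)-1)$ over connected components. *)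

theory Defs
  imports "Graph_Theory.Graph_Theory" "HOL-Library.Poly_Mapping" "HOL-Library.Function_Algebras"
    "HOL-Computational_Algebra.Fraction_Field"
begin

text \<open>The rational function field F(psi) in independent indeterminates psi(e), one per
  arc e: the fraction field of the polynomial ring F[psi(e) : e], where polynomials are
  finitely supported maps from monomials (finitely supported exponent vectors) to F.
  The linear order on the arc type is only a technical device required by the library
  to provide the integral-domain instance.\<close>

type_synonym ('e, 'k) ratfun = "(('e \<Rightarrow>\<^sub>0 nat) \<Rightarrow>\<^sub>0 'k) fract"

definition psi :: "'e \<Rightarrow> ('e::linorder, 'k::field) ratfun" where
  "psi e = Fract (Poly_Mapping.single (Poly_Mapping.single e 1) 1) 1"

text \<open>Twisted structure sheaf: head maps identity, tail maps multiplication by psi(e).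
  1-cochains are families (x_e) for e in arcs G, represented by functions vanishing
  outside arcs G; d = d_h - d_t lands in the 0-cochains indexed by vertices.\<close>

definition d_head :: "('v,'e) pre_digraph \<Rightarrow> ('e \<Rightarrow> ('e::linorder,'k::field) ratfun) \<Rightarrow> 'v \<Rightarrow> ('e,'k) ratfun" where
  "d_head G x v = (\<Sum>e\<in>{e\<in>arcs G. head G e = v}. x e)"

definition d_tail :: "('v,'e) pre_digraph \<Rightarrow> ('e \<Rightarrow> ('e::linorder,'k::field) ratfun) \<Rightarrow> 'v \<Rightarrow> ('e,'k) ratfun" where
  "d_tail G x v = (\<Sum>e\<in>{e\<in>arcs G. tail G e = v}. psi e * x e)"

definition twisted_d :: "('v,'e) pre_digraph \<Rightarrow> ('e \<Rightarrow> ('e::linorder,'k::field) ratfun) \<Rightarrow> 'v \<Rightarrow> ('e,'k) ratfun" where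
  "twisted_d G x v = d_head G x v - d_tail G x v"

definition twisted_kernel :: "'k::field itself \<Rightarrow> ('v,'e::linorder) pre_digraph \<Rightarrow> ('e \<Rightarrow> ('e,'k) ratfun) set" where
  "twisted_kernel _ G = {x. (\<forall>e. e \<notin> arcs G \<longrightarrow> x e = 0) \<and> (\<forall>v\<in>verts G. twisted_d G x v = 0)}"

definition h1_twist_struct :: "'k::field itself \<Rightarrow> ('v,'e::linorder) pre_digraph \<Rightarrow> nat" where
  "h1_twist_struct K G =
     vector_space.dim (\<lambda>(c::('e,'k) ratfun) x e. c * x e) (twisted_kernel K G)"

definition components :: "('v,'e) pre_digraph \<Rightarrow> 'v set set" where
  "components G = pre_digraph.sccs_verts (with_proj (mk_symmetric G))"

definition h1_comp :: "('v,'e) pre_digraph \<Rightarrow> 'v set \<Rightarrow> int" where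
  "h1_comp G C = int (card {e\<in>arcs G. tail G e \<in> C}) - int (card C) + 1"

definition rho :: "('v,'e) pre_digraph \<Rightarrow> int" where
  "rho G = (\<Sum>C\<in>components G. max 0 (h1_comp G C - 1))"

end

theory Submission
  imports Defs
begin

definition mono :: "('e \<Rightarrow>\<^sub>0 nat) \<Rightarrow> ('e \<Rightarrow>\<^sub>0 nat) \<Rightarrow> ('e::linorder, 'k::field) ratfun" where
  "mono a b = Fract (Poly_Mapping.single a 1) (Poly_Mapping.single b 1)"

lemma single_ne0: "Poly_Mapping.single a (1::'k::field) \<noteq> 0"
  by (metis lookup_single_eq lookup_zero zero_neq_one)

lemma single1_inj: "Poly_Mapping.single a (1::'k::field) = Poly_Mapping.single b 1 \<longleftrightarrow> a = b"
  by (metis lookup_single_eq lookup_single_not_eq zero_neq_one)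

lemma mono_nonzero: "mono a b \<noteq> (0 :: ('e::linorder,'k::field) ratfun)"
  unfolding mono_def Zero_fract_def
  by (simp add: eq_fract single_ne0)

lemma mono_mult: "mono a b * mono c d = (mono (a+c) (b+d) :: ('e::linorder,'k::field) ratfun)"
  unfolding mono_def by (simp add: mult_single)

lemma mono_div: "mono a b / mono c d = (mono (a+d) (b+c) :: ('e::linorder,'k::field) ratfun)"
  unfolding mono_def by (simp add: mult_single)

lemma mono_eq: "(mono a b :: ('e::linorder,'k::field) ratfun) = mono c d \<longleftrightarrow> a + d = c + b"
  unfolding mono_def by (simp add: eq_fract single_ne0 mult_single single1_inj)

lemma psi_mono: "psi e = (mono (Poly_Mapping.single e 1) 0 :: ('e::linorder,'k::field) ratfun)"
  unfolding mono_def psi_def by simp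

lemma mono_generic:
  assumes "Poly_Mapping.lookup a1 e = 0" "Poly_Mapping.lookup b1 e = 0" "Poly_Mapping.lookup a2 e = 0" "Poly_Mapping.lookup b2 e = 0"
  shows "(mono a1 b1 :: ('e::linorder,'k::field) ratfun) \<noteq> psi e * mono a2 b2"
proof
  assume "(mono a1 b1 :: ('e::linorder,'k::field) ratfun) = psi e * mono a2 b2"
  then have "a1 + b2 = (Poly_Mapping.single e 1 + a2) + (0 + b1)"
    by (simp add: psi_mono mono_mult mono_eq)
  then have "Poly_Mapping.lookup (a1 + b2) e = Poly_Mapping.lookup ((Poly_Mapping.single e 1 + a2) + (0 + b1)) e" by simp
  then show False using assms by (simp add: plus_poly_mapping.rep_eq)
qed

definition supp_in :: "'a set \<Rightarrow> ('a \<Rightarrow> 'r::zero) \<Rightarrow> bool" where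
  "supp_in S x \<longleftrightarrow> (\<forall>e. e \<notin> S \<longrightarrow> x e = 0)"

interpretation V: vector_space "\<lambda>(c::('e::linorder,'k::field) ratfun) (x::'e \<Rightarrow> ('e,'k) ratfun) e. c * x e"
  by unfold_locales (auto simp: fun_eq_iff algebra_simps)

locale tw = fin_digraph G for G :: "('v,'e::linorder) pre_digraph"
begin

definition pair :: "('v \<Rightarrow> ('e,'k::field) ratfun) \<Rightarrow> ('v \<Rightarrow> ('e,'k) ratfun) \<Rightarrow> ('e,'k) ratfun" where
  "pair \<phi> y = (\<Sum>v\<in>verts G. \<phi> v * y v)"

lemma d_add: "twisted_d G (\<lambda>e. x e + y e) v = twisted_d G x v + twisted_d G y v"
  unfolding twisted_d_def d_head_def d_tail_def by (simp add: sum.distrib algebra_simps)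

lemma d_scale: "twisted_d G (\<lambda>e. c * x e) v = c * twisted_d G x v"
  unfolding twisted_d_def d_head_def d_tail_def by (simp add: sum_distrib_left algebra_simps)

lemma d_zero: "twisted_d G (\<lambda>e. 0) v = 0"
  unfolding twisted_d_def d_head_def d_tail_def by simp

lemma d_delta: "e \<in> arcs G \<Longrightarrow> twisted_d G (\<lambda>e'. if e' = e then 1 else 0) v
   = (if head G e = v then 1 else 0) - psi e * (if tail G e = v then 1 else 0)"
  unfolding twisted_d_def d_head_def d_tail_def
  by (simp add: if_distrib[of "\<lambda>x. psi _ * x"] sum.delta[OF finite_Collect_conjI] cong: if_cong)

lemma sum_group_head:
  fixes \<phi> :: "'v \<Rightarrow> 'r::comm_ring_1"
  shows "(\<Sum>v\<in>verts G. \<phi> v * (\<Sum>e\<in>{e\<in>arcs G. head G e = v}. g e)) = (\<Sum>e\<in>arcs G. \<phi> (head G e) * g e)"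
proof -
  have "(\<Sum>v\<in>verts G. \<phi> v * (\<Sum>e\<in>{e\<in>arcs G. head G e = v}. g e))
      = (\<Sum>v\<in>verts G. (\<Sum>e\<in>{e\<in>arcs G. head G e = v}. \<phi> (head G e) * g e))"
    by (auto simp: sum_distrib_left intro!: sum.cong)
  also have "\<dots> = (\<Sum>e\<in>arcs G. \<phi> (head G e) * g e)"
    by (rule sum.group) auto
  finally show ?thesis .
qed

lemma sum_group_tail:
  fixes \<phi> :: "'v \<Rightarrow> 'r::comm_ring_1"
  shows "(\<Sum>v\<in>verts G. \<phi> v * (\<Sum>e\<in>{e\<in>arcs G. tail G e = v}. g e)) = (\<Sum>e\<in>arcs G. \<phi> (tail G e) * g e)"
proof -
  have "(\<Sum>v\<in>verts G. \<phi> v * (\<Sum>e\<in>{e\<in>arcs G. tail G e = v}. g e))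
      = (\<Sum>v\<in>verts G. (\<Sum>e\<in>{e\<in>arcs G. tail G e = v}. \<phi> (tail G e) * g e))"
    by (auto simp: sum_distrib_left intro!: sum.cong)
  also have "\<dots> = (\<Sum>e\<in>arcs G. \<phi> (tail G e) * g e)"
    by (rule sum.group) auto
  finally show ?thesis .
qed

lemma pair_d: "pair \<phi> (twisted_d G x) = (\<Sum>e\<in>arcs G. x e * (\<phi> (head G e) - psi e * \<phi> (tail G e)))"
proof -
  have "pair \<phi> (twisted_d G x) = (\<Sum>v\<in>verts G. \<phi> v * (\<Sum>e\<in>{e\<in>arcs G. head G e = v}. x e))
     - (\<Sum>v\<in>verts G. \<phi> v * (\<Sum>e\<in>{e\<in>arcs G. tail G e = v}. psi e * x e))"
    unfolding pair_def twisted_d_def d_head_def d_tail_def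
    by (simp add: right_diff_distrib sum_subtractf)
  also have "\<dots> = (\<Sum>e\<in>arcs G. \<phi> (head G e) * x e) - (\<Sum>e\<in>arcs G. \<phi> (tail G e) * (psi e * x e))"
    by (simp only: sum_group_head sum_group_tail)
  also have "\<dots> = (\<Sum>e\<in>arcs G. x e * (\<phi> (head G e) - psi e * \<phi> (tail G e)))"
    by (simp add: sum_subtractf[symmetric] algebra_simps)
  finally show ?thesis .
qed

lemma pair_add: "pair \<phi> (\<lambda>v. y v + z v) = pair \<phi> y + pair \<phi> z"
  unfolding pair_def by (simp add: sum.distrib algebra_simps)
lemma pair_diff: "pair \<phi> (\<lambda>v. y v - z v) = pair \<phi> y - pair \<phi> z"
  unfolding pair_def by (simp add: sum_subtractf algebra_simps)
lemma pair_scale: "pair \<phi> (\<lambda>v. c * y v) = c * pair \<phi> y"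
  unfolding pair_def by (simp add: sum_distrib_left algebra_simps)


definition rel :: "'e set \<Rightarrow> ('v \<times> 'v) set" where
  "rel S = (\<Union>e\<in>S. {(tail G e, head G e), (head G e, tail G e)})"

definition comp :: "'e set \<Rightarrow> 'v \<Rightarrow> 'v set" where
  "comp S v = {u. (v,u) \<in> (rel S)\<^sup>*}"

lemma sym_rel: "sym (rel S)"
  unfolding rel_def sym_def by auto

lemma rt_sym: "(u,v) \<in> (rel S)\<^sup>* \<Longrightarrow> (v,u) \<in> (rel S)\<^sup>*"
  using sym_rtrancl[OF sym_rel] by (auto simp: sym_def)

lemma comp_refl[simp]: "v \<in> comp S v"
  unfolding comp_def by simp

lemma comp_eq: "u \<in> comp S v \<Longrightarrow> comp S u = comp S v"
  unfolding comp_def set_eq_iff mem_Collect_eq by (metis rt_sym rtrancl_trans)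

lemma comp_eq_iff: "comp S u = comp S v \<longleftrightarrow> u \<in> comp S v"
  by (metis comp_eq comp_refl)

lemma comp_disj: "comp S u \<noteq> comp S v \<Longrightarrow> comp S u \<inter> comp S v = {}"
  using comp_eq by blast

lemma rel_sub: "S \<subseteq> arcs G \<Longrightarrow> rel S \<subseteq> verts G \<times> verts G"
  unfolding rel_def by auto

lemma comp_sub: assumes "S \<subseteq> arcs G" "v \<in> verts G" shows "comp S v \<subseteq> verts G"
proof
  fix u assume "u \<in> comp S v"
  then have "(v,u) \<in> (rel S)\<^sup>*" by (simp add: comp_def)
  then show "u \<in> verts G"
  proof (induction rule: rtrancl_induct)
    case base then show ?case using assms by simp
  next
    case (step y z) then show ?case using rel_sub[OF assms(1)] by blast
  qed
qed

lemma finite_comp: "S \<subseteq> arcs G \<Longrightarrow> v \<in> verts G \<Longrightarrow> finite (comp S v)"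
  by (rule finite_subset[OF comp_sub finite_verts])

lemma comp_edge: assumes "e \<in> S" shows "tail G e \<in> comp S v \<longleftrightarrow> head G e \<in> comp S v"
proof -
  have "(tail G e, head G e) \<in> rel S" "(head G e, tail G e) \<in> rel S"
    using assms unfolding rel_def by auto
  then show ?thesis unfolding comp_def mem_Collect_eq
    by (meson rtrancl.rtrancl_into_rtrancl)
qed

lemma rel_insert: "rel (insert e S) = rel S \<union> {(tail G e, head G e), (head G e, tail G e)}"
  unfolding rel_def by auto

lemma comp_closed: "u \<in> comp S x \<Longrightarrow> (u,w) \<in> rel S \<Longrightarrow> w \<in> comp S x"
  unfolding comp_def mem_Collect_eq by (rule rtrancl.rtrancl_into_rtrancl)

lemma comp_mono: "S \<subseteq> T \<Longrightarrow> comp S v \<subseteq> comp T v"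
proof -
  assume "S \<subseteq> T"
  then have "rel S \<subseteq> rel T" unfolding rel_def by auto
  then show ?thesis unfolding comp_def using rtrancl_mono by blast
qed

lemma comp_insert:
  "comp (insert e S) v = comp S v \<union> (if tail G e \<in> comp S v then comp S (head G e) else {})
       \<union> (if head G e \<in> comp S v then comp S (tail G e) else {})" (is "?L = ?R")
proof
  show "?R \<subseteq> ?L"
  proof -
    have 1: "comp S x \<subseteq> comp (insert e S) x" for x by (rule comp_mono) auto
    have 2: "head G e \<in> comp (insert e S) (tail G e)" "tail G e \<in> comp (insert e S) (head G e)"
      using comp_edge[of e "insert e S" "tail G e"] comp_edge[of e "insert e S" "head G e"] by simp_all
    have 3: "comp S (head G e) \<subseteq> ?L" if "tail G e \<in> comp S v"
    proof -
      have "tail G e \<in> ?L" using 1 that by blast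
      then have "comp (insert e S) (tail G e) = ?L" by (rule comp_eq)
      moreover have "comp (insert e S) (head G e) = comp (insert e S) (tail G e)"
        using 2 comp_eq by blast
      ultimately show ?thesis using 1 by blast
    qed
    have 4: "comp S (tail G e) \<subseteq> ?L" if "head G e \<in> comp S v"
    proof -
      have "head G e \<in> ?L" using 1 that by blast
      then have "comp (insert e S) (head G e) = ?L" by (rule comp_eq)
      moreover have "comp (insert e S) (tail G e) = comp (insert e S) (head G e)"
        using 2 comp_eq by blast
      ultimately show ?thesis using 1 by blast
    qed
    show ?thesis using 1 3 4 by (simp split: if_splits)
  qed
next
  show "?L \<subseteq> ?R"
  proof
    fix u assume "u \<in> ?L"
    then have "(v,u) \<in> (rel (insert e S))\<^sup>*" by (simp add: comp_def)
    then show "u \<in> ?R"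
    proof (induction rule: rtrancl_induct)
      case base then show ?case by simp
    next
      case (step u w)
      from step.hyps(2) consider "(u,w) \<in> rel S" | "u = tail G e" "w = head G e" | "u = head G e" "w = tail G e"
        unfolding rel_insert by auto
      then show ?case
      proof cases
        case 1
        have c: "u \<in> comp S x \<Longrightarrow> w \<in> comp S x" for x using comp_closed 1 by blast
        show ?thesis using step.IH c by (simp split: if_splits) blast+
      next
        case 2
        show ?thesis
        proof (cases "tail G e \<in> comp S v")
          case True then show ?thesis using 2 by simp
        next
          case False
          then have "u \<in> comp S (tail G e)" "head G e \<in> comp S v" using step.IH 2 by (simp_all split: if_splits)
          then show ?thesis using 2 by simp
        qed
      next
        case 3
        show ?thesis
        proof (cases "head G e \<in> comp S v")
          case True then show ?thesis using 3 by simp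
        next
          case False
          then have "u \<in> comp S (head G e)" "tail G e \<in> comp S v" using step.IH 3 by (simp_all split: if_splits)
          then show ?thesis using 3 by simp
        qed
      qed
    qed
  qed
qed

definition comps :: "'e set \<Rightarrow> 'v set set" where
  "comps S = comp S ` verts G"

definition fval :: "'e set \<Rightarrow> 'v set \<Rightarrow> int" where
  "fval S C = int (card {e\<in>S. tail G e \<in> C}) - int (card C)"

definition rhoS :: "'e set \<Rightarrow> int" where
  "rhoS S = (\<Sum>C\<in>comps S. max 0 (fval S C))"



definition img :: "'e set \<Rightarrow> ('v \<Rightarrow> ('e,'k::field) ratfun) set" where
  "img S = {y. \<exists>x. supp_in S x \<and> y = twisted_d G x}"

lemma d_diff: "twisted_d G (\<lambda>e. x e - y e) v = twisted_d G x v - twisted_d G y v"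
  unfolding twisted_d_def d_head_def d_tail_def by (simp add: sum_subtractf algebra_simps)

lemma img_zero: "(\<lambda>v. 0) \<in> img S"
  unfolding img_def supp_in_def by (rule CollectI, rule exI[of _ "\<lambda>e. 0"]) (simp add: d_zero fun_eq_iff)

lemma img_add: "y \<in> img S \<Longrightarrow> z \<in> img S \<Longrightarrow> (\<lambda>v. y v + z v) \<in> img S"
  unfolding img_def supp_in_def
  by (clarsimp, rule_tac x="\<lambda>e. x e + xa e" in exI) (simp add: d_add fun_eq_iff)

lemma img_diff: "y \<in> img S \<Longrightarrow> z \<in> img S \<Longrightarrow> (\<lambda>v. y v - z v) \<in> img S"
  unfolding img_def supp_in_def
  by (clarsimp, rule_tac x="\<lambda>e. x e - xa e" in exI) (simp add: d_diff fun_eq_iff)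

lemma img_scale: "y \<in> img S \<Longrightarrow> (\<lambda>v. c * y v) \<in> img S"
  unfolding img_def supp_in_def
  by (clarsimp, rule_tac x="\<lambda>e. c * x e" in exI) (simp add: d_scale fun_eq_iff)

lemma img_mono: "y \<in> img S \<Longrightarrow> S \<subseteq> T \<Longrightarrow> y \<in> img T"
  unfolding img_def supp_in_def by blast

lemma img_delta: "e \<in> S \<Longrightarrow> twisted_d G (\<lambda>e'. if e' = e then 1 else 0) \<in> img S"
  unfolding img_def supp_in_def by (rule CollectI, rule exI[of _ "\<lambda>e'. if e' = e then 1 else 0"]) auto

definition Full :: "'e set \<Rightarrow> 'v set \<Rightarrow> ('e,'k::field) ratfun itself \<Rightarrow> bool" where
  "Full S C K \<longleftrightarrow> (\<forall>y::'v \<Rightarrow> ('e,'k) ratfun. supp_in C y \<longrightarrow> y \<in> img S)"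

definition Tree :: "'e set \<Rightarrow> 'v set \<Rightarrow> ('v \<Rightarrow> ('e,'k::field) ratfun) \<Rightarrow> bool" where
  "Tree S C \<phi> \<longleftrightarrow> supp_in C \<phi> \<and>
     (\<forall>v\<in>C. \<exists>a b. \<phi> v = mono a b \<and> (\<forall>e'. e' \<notin> S \<longrightarrow> Poly_Mapping.lookup a e' = 0 \<and> Poly_Mapping.lookup b e' = 0)) \<and>
     (\<forall>e\<in>S. \<phi> (head G e) = psi e * \<phi> (tail G e)) \<and>
     (\<forall>y. supp_in C y \<longrightarrow> pair \<phi> y = 0 \<longrightarrow> y \<in> img S)"

lemma Tree_annih: assumes "Tree S C \<phi>" "supp_in S x" shows "pair \<phi> (twisted_d G x) = 0"
  unfolding pair_d
proof (rule sum.neutral, rule ballI)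
  fix e assume "e \<in> arcs G"
  show "x e * (\<phi> (head G e) - psi e * \<phi> (tail G e)) = 0"
    using assms unfolding Tree_def supp_in_def by (cases "e \<in> S") auto
qed

lemma pair_delta: "e \<in> arcs G \<Longrightarrow> pair \<phi> (twisted_d G (\<lambda>e'. if e' = e then 1 else 0)) = \<phi> (head G e) - psi e * \<phi> (tail G e)"
proof -
  assume e: "e \<in> arcs G"
  have "pair \<phi> (twisted_d G (\<lambda>e'. if e' = e then 1 else 0)) = (\<Sum>e'\<in>arcs G. if e' = e then \<phi> (head G e') - psi e' * \<phi> (tail G e') else 0)"
    unfolding pair_d by (rule sum.cong) auto
  also have "\<dots> = \<phi> (head G e) - psi e * \<phi> (tail G e)"
    using e by (simp add: sum.delta)
  finally show ?thesis .
qed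

lemma psi_nonzero: "psi e \<noteq> 0"
  by (simp add: psi_mono mono_nonzero)

lemma Tree_nonvan:
  assumes "Tree S C \<phi>" "e \<notin> S" "tail G e \<in> C \<or> head G e \<in> C"
  shows "\<phi> (head G e) - psi e * \<phi> (tail G e) \<noteq> 0"
proof -
  have sup: "supp_in C \<phi>" and m: "\<forall>v\<in>C. \<exists>a b. \<phi> v = mono a b \<and> (\<forall>e'. e' \<notin> S \<longrightarrow> Poly_Mapping.lookup a e' = 0 \<and> Poly_Mapping.lookup b e' = 0)"
    using assms(1) unfolding Tree_def by auto
  consider "tail G e \<in> C" "head G e \<in> C" | "tail G e \<in> C" "head G e \<notin> C" | "tail G e \<notin> C" "head G e \<in> C"
    using assms(3) by blast
  then show ?thesis
  proof cases
    case 1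
    note c = 1
    obtain a1 b1 where h1: "\<phi> (head G e) = mono a1 b1" "\<forall>e'. e' \<notin> S \<longrightarrow> Poly_Mapping.lookup a1 e' = 0 \<and> Poly_Mapping.lookup b1 e' = 0"
      using m c by meson
    obtain a2 b2 where h2: "\<phi> (tail G e) = mono a2 b2" "\<forall>e'. e' \<notin> S \<longrightarrow> Poly_Mapping.lookup a2 e' = 0 \<and> Poly_Mapping.lookup b2 e' = 0"
      using m c by meson
    have l: "Poly_Mapping.lookup a1 e = 0" "Poly_Mapping.lookup b1 e = 0" "Poly_Mapping.lookup a2 e = 0" "Poly_Mapping.lookup b2 e = 0"
      using h1(2) h2(2) assms(2) by auto
    show ?thesis using mono_generic[OF l] h1(1) h2(1) by simp
  next
    case 2
    then obtain a2 b2 where "\<phi> (tail G e) = mono a2 b2" using m by meson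
    moreover have "\<phi> (head G e) = 0" using sup 2 unfolding supp_in_def by blast
    ultimately show ?thesis by (simp add: psi_nonzero mono_nonzero)
  next
    case 3
    then obtain a1 b1 where "\<phi> (head G e) = mono a1 b1" using m by meson
    moreover have "\<phi> (tail G e) = 0" using sup 3 unfolding supp_in_def by blast
    ultimately show ?thesis by (simp add: mono_nonzero)
  qed
qed

lemma Tree_mono:
  assumes "Tree S C \<phi>" "tail G e \<notin> C" "head G e \<notin> C"
  shows "Tree (insert e S) C \<phi>"
proof -
  have "\<phi> (tail G e) = 0" "\<phi> (head G e) = 0" using assms unfolding Tree_def supp_in_def by auto
  moreover have "\<And>y. y \<in> img S \<Longrightarrow> y \<in> img (insert e S)" using img_mono[of _ S "insert e S"] by blast
  moreover have "\<forall>v\<in>C. \<exists>a b. \<phi> v = mono a b \<and> (\<forall>e'. e' \<notin> insert e S \<longrightarrow> Poly_Mapping.lookup a e' = 0 \<and> Poly_Mapping.lookup b e' = 0)"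
  proof
    fix v assume "v \<in> C"
    then obtain a b where "\<phi> v = mono a b" "\<forall>e'. e' \<notin> S \<longrightarrow> Poly_Mapping.lookup a e' = 0 \<and> Poly_Mapping.lookup b e' = 0"
      using assms(1) unfolding Tree_def by meson
    then show "\<exists>a b. \<phi> v = mono a b \<and> (\<forall>e'. e' \<notin> insert e S \<longrightarrow> Poly_Mapping.lookup a e' = 0 \<and> Poly_Mapping.lookup b e' = 0)"
      by auto
  qed
  ultimately show ?thesis using assms(1) unfolding Tree_def by (simp; blast)
qed

lemma Full_mono: "Full S C K \<Longrightarrow> S \<subseteq> T \<Longrightarrow> Full T C K"
  unfolding Full_def using img_mono by blast

lemma Full_empty: fixes K :: "('e,'k::field) ratfun itself" shows "Full S {} K"
  unfolding Full_def supp_in_def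
proof (intro allI impI)
  fix y :: "'v \<Rightarrow> ('e,'k) ratfun" assume "\<forall>e. e \<notin> {} \<longrightarrow> y e = 0"
  then have "y = (\<lambda>v. 0)" by auto
  then show "y \<in> img S" using img_zero by simp
qed

lemma Full_union: fixes K :: "('e,'k::field) ratfun itself" assumes "Full S C1 K" "Full S C2 K" shows "Full S (C1 \<union> C2) K"
  unfolding Full_def
proof (intro allI impI)
  fix y :: "'v \<Rightarrow> ('e,'k) ratfun" assume y: "supp_in (C1 \<union> C2) y"
  define y1 where "y1 = (\<lambda>v. if v \<in> C1 then y v else 0)"
  define y2 where "y2 = (\<lambda>v. y v - y1 v)"
  have "y1 \<in> img S" using assms(1) unfolding Full_def y1_def supp_in_def by auto
  moreover have "y2 \<in> img S" using assms(2) y unfolding Full_def y2_def y1_def supp_in_def by auto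
  ultimately have "(\<lambda>v. y1 v + y2 v) \<in> img S" by (rule img_add)
  moreover have "(\<lambda>v. y1 v + y2 v) = y" unfolding y2_def by simp
  ultimately show "y \<in> img S" by simp
qed

lemma pair_restrict: "supp_in C \<phi> \<Longrightarrow> pair \<phi> (\<lambda>v. if v \<in> C then z v else 0) = pair \<phi> z"
  unfolding pair_def supp_in_def by (intro sum.cong) auto

lemma pair_restrict0: "supp_in C2 \<phi> \<Longrightarrow> C1 \<inter> C2 = {} \<Longrightarrow> pair \<phi> (\<lambda>v. if v \<in> C1 then z v else 0) = 0"
  unfolding pair_def supp_in_def by (intro sum.neutral) auto

lemma pair_lin: "pair (\<lambda>v. \<phi>1 v + c * \<phi>2 v) z = pair \<phi>1 z + c * pair \<phi>2 z"
  unfolding pair_def by (simp add: sum.distrib sum_distrib_left algebra_simps)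

lemma d_delta_supp:
  assumes "e \<in> arcs G" "tail G e \<in> C" "head G e \<in> C"
  shows "supp_in C (twisted_d G (\<lambda>e'. if e' = e then 1 else 0))"
  unfolding supp_in_def using assms by (auto simp: d_delta)


lemma Full_merge_tree:
  fixes K :: "('e,'k::field) ratfun itself" and \<phi> :: "'v \<Rightarrow> ('e,'k) ratfun"
  assumes T: "Tree S C1 \<phi>" and F: "Full S C2 K" and e: "e \<in> arcs G" "e \<notin> S"
    and ends: "tail G e \<in> C1 \<union> C2" "head G e \<in> C1 \<union> C2" "tail G e \<in> C1 \<or> head G e \<in> C1"
  shows "Full (insert e S) (C1 \<union> C2) K"
  unfolding Full_def
proof (intro allI impI)
  fix y :: "'v \<Rightarrow> ('e,'k) ratfun" assume y: "supp_in (C1 \<union> C2) y"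
  define \<delta> where "\<delta> = (\<lambda>e'. if e' = e then 1 else (0::('e,'k) ratfun))"
  define w where "w = twisted_d G \<delta>"
  define D where "D = \<phi> (head G e) - psi e * \<phi> (tail G e)"
  have D0: "D \<noteq> 0" using Tree_nonvan[OF T e(2) ends(3)] D_def by simp
  have pw: "pair \<phi> w = D" unfolding w_def \<delta>_def D_def using pair_delta[OF e(1)] .
  define c where "c = pair \<phi> y / D"
  define z where "z = (\<lambda>v. y v - c * w v)"
  have "pair \<phi> z = pair \<phi> y - c * pair \<phi> w"
    unfolding z_def using pair_diff[of \<phi> y "\<lambda>v. c * w v"] pair_scale[of \<phi> c w] by simp
  then have pz: "pair \<phi> z = 0" using pw D0 unfolding c_def by simp
  have wsupp: "supp_in (C1 \<union> C2) w" unfolding w_def \<delta>_def by (rule d_delta_supp) (use e ends in auto)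
  have zsupp: "supp_in (C1 \<union> C2) z" using y wsupp unfolding z_def supp_in_def by auto
  define z1 where "z1 = (\<lambda>v. if v \<in> C1 then z v else 0)"
  define z2 where "z2 = (\<lambda>v. z v - z1 v)"
  have s\<phi>: "supp_in C1 \<phi>" using T unfolding Tree_def by blast
  have "pair \<phi> z1 = 0" unfolding z1_def pair_restrict[OF s\<phi>] by (rule pz)
  moreover have "supp_in C1 z1" unfolding z1_def supp_in_def by auto
  ultimately have z1i: "z1 \<in> img S" using T unfolding Tree_def by blast
  have "supp_in C2 z2" using zsupp unfolding z2_def z1_def supp_in_def by auto
  then have z2i: "z2 \<in> img S" using F unfolding Full_def by blast
  have "(\<lambda>v. z1 v + z2 v) \<in> img S" by (rule img_add[OF z1i z2i])
  moreover have "(\<lambda>v. z1 v + z2 v) = z" unfolding z2_def by simp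
  ultimately have zi: "z \<in> img (insert e S)" using img_mono[of z S "insert e S"] by auto
  have "w \<in> img (insert e S)" unfolding w_def \<delta>_def by (rule img_delta) simp
  then have "(\<lambda>v. c * w v) \<in> img (insert e S)" by (rule img_scale)
  from img_add[OF zi this] have "(\<lambda>v. z v + c * w v) \<in> img (insert e S)" .
  moreover have "(\<lambda>v. z v + c * w v) = y" unfolding z_def by simp
  ultimately show "y \<in> img (insert e S)" by simp
qed

lemma Tree_monoE:
  assumes "Tree S C \<phi>" "v \<in> C"
  obtains a b where "\<phi> v = mono a b" "\<And>e'. e' \<notin> S \<Longrightarrow> Poly_Mapping.lookup a e' = 0 \<and> Poly_Mapping.lookup b e' = 0"
  using assms unfolding Tree_def by meson

lemma Tree_merge:
  fixes \<phi>1 \<phi>2 :: "'v \<Rightarrow> ('e,'k::field) ratfun"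
  assumes T1: "Tree S C1 \<phi>1" and T2: "Tree S C2 \<phi>2" and disj: "C1 \<inter> C2 = {}"
    and e: "e \<in> arcs G" "e \<notin> S" "tail G e \<in> C1" "head G e \<in> C2"
  shows "\<exists>\<phi>::'v \<Rightarrow> ('e,'k) ratfun. Tree (insert e S) (C1 \<union> C2) \<phi>"
proof -
  define a where "a = tail G e"
  define b where "b = head G e"
  have aC1: "a \<in> C1" and bC2: "b \<in> C2" using e unfolding a_def b_def by auto
  have aC2: "a \<notin> C2" and bC1: "b \<notin> C1" using aC1 bC2 disj by auto
  have s1: "supp_in C1 \<phi>1" and s2: "supp_in C2 \<phi>2" using T1 T2 unfolding Tree_def by auto
  have r1: "\<forall>e'\<in>S. \<phi>1 (head G e') = psi e' * \<phi>1 (tail G e')"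
    and r2: "\<forall>e'\<in>S. \<phi>2 (head G e') = psi e' * \<phi>2 (tail G e')" using T1 T2 unfolding Tree_def by auto
  obtain a1 b1 where h1: "\<phi>1 a = mono a1 b1" and l1: "\<And>e'. e' \<notin> S \<Longrightarrow> Poly_Mapping.lookup a1 e' = 0 \<and> Poly_Mapping.lookup b1 e' = 0"
    by (metis Tree_monoE[OF T1 aC1])
  obtain a2 b2 where h2: "\<phi>2 b = mono a2 b2" and l2: "\<And>e'. e' \<notin> S \<Longrightarrow> Poly_Mapping.lookup a2 e' = 0 \<and> Poly_Mapping.lookup b2 e' = 0"
    by (metis Tree_monoE[OF T2 bC2])
  define lam where "lam = psi e * \<phi>1 a / \<phi>2 b"
  have lam_mono: "lam = mono (Poly_Mapping.single e 1 + a1 + b2) (0 + b1 + a2)"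
    unfolding lam_def h1 h2 psi_mono mono_mult mono_div by simp
  have lam0: "lam \<noteq> 0" unfolding lam_mono by (rule mono_nonzero)
  have phi2b: "\<phi>2 b \<noteq> 0" unfolding h2 by (rule mono_nonzero)
  have phi2a: "\<phi>2 a = 0" using s2 aC2 unfolding supp_in_def by blast
  have phi1b: "\<phi>1 b = 0" using s1 bC1 unfolding supp_in_def by blast
  define \<phi> where "\<phi> = (\<lambda>v. \<phi>1 v + lam * \<phi>2 v)"
  have P1: "supp_in (C1 \<union> C2) \<phi>" using s1 s2 unfolding supp_in_def \<phi>_def by auto
  have P2: "\<forall>v\<in>C1 \<union> C2. \<exists>a b. \<phi> v = mono a b \<and> (\<forall>e'. e' \<notin> insert e S \<longrightarrow> Poly_Mapping.lookup a e' = 0 \<and> Poly_Mapping.lookup b e' = 0)"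
  proof
    fix v assume v: "v \<in> C1 \<union> C2"
    show "\<exists>a b. \<phi> v = mono a b \<and> (\<forall>e'. e' \<notin> insert e S \<longrightarrow> Poly_Mapping.lookup a e' = 0 \<and> Poly_Mapping.lookup b e' = 0)"
    proof (cases "v \<in> C1")
      case True
      then have "v \<notin> C2" using disj by auto
      then have "\<phi>2 v = 0" using s2 unfolding supp_in_def by blast
      moreover obtain a3 b3 where "\<phi>1 v = mono a3 b3" "\<And>e'. e' \<notin> S \<Longrightarrow> Poly_Mapping.lookup a3 e' = 0 \<and> Poly_Mapping.lookup b3 e' = 0"
        by (metis Tree_monoE[OF T1 True])
      ultimately show ?thesis unfolding \<phi>_def by auto
    next
      case False
      then have vC2: "v \<in> C2" using v by auto
      have "\<phi>1 v = 0" using s1 False unfolding supp_in_def by blast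
      moreover obtain a3 b3 where m3: "\<phi>2 v = mono a3 b3" and l3: "\<And>e'. e' \<notin> S \<Longrightarrow> Poly_Mapping.lookup a3 e' = 0 \<and> Poly_Mapping.lookup b3 e' = 0"
        by (metis Tree_monoE[OF T2 vC2])
      ultimately have "\<phi> v = mono (Poly_Mapping.single e 1 + a1 + b2 + a3) (0 + b1 + a2 + b3)"
        unfolding \<phi>_def lam_mono by (simp add: mono_mult)
      moreover have "\<forall>e'. e' \<notin> insert e S \<longrightarrow> Poly_Mapping.lookup (Poly_Mapping.single e 1 + a1 + b2 + a3) e' = 0 \<and> Poly_Mapping.lookup (0 + b1 + a2 + b3) e' = 0"
        using l1 l2 l3 by (simp add: plus_poly_mapping.rep_eq) (metis lookup_single_not_eq)
      ultimately show ?thesis by blast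
    qed
  qed
  have P3: "\<forall>e'\<in>insert e S. \<phi> (head G e') = psi e' * \<phi> (tail G e')"
  proof
    fix e' assume "e' \<in> insert e S"
    then consider "e' = e" | "e' \<in> S" by blast
    then show "\<phi> (head G e') = psi e' * \<phi> (tail G e')"
    proof cases
      case 1
      have "\<phi> (head G e) = lam * \<phi>2 b" unfolding \<phi>_def b_def[symmetric] phi1b by simp
      also have "\<dots> = psi e * \<phi>1 a" unfolding lam_def using phi2b by simp
      also have "\<dots> = psi e * \<phi> (tail G e)" unfolding \<phi>_def a_def[symmetric] phi2a by simp
      finally show ?thesis using 1 by simp
    next
      case 2
      then show ?thesis using r1 r2 unfolding \<phi>_def by (simp add: algebra_simps)
    qed
  qed
  have P4: "\<forall>y. supp_in (C1 \<union> C2) y \<longrightarrow> pair \<phi> y = 0 \<longrightarrow> y \<in> img (insert e S)"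
  proof (intro allI impI)
    fix y :: "'v \<Rightarrow> ('e,'k) ratfun" assume y: "supp_in (C1 \<union> C2) y" and py: "pair \<phi> y = 0"
    define \<delta> where "\<delta> = (\<lambda>e'. if e' = e then 1 else (0::('e,'k) ratfun))"
    define w where "w = twisted_d G \<delta>"
    define D where "D = \<phi>1 (head G e) - psi e * \<phi>1 (tail G e)"
    have D0: "D \<noteq> 0" using Tree_nonvan[OF T1 e(2)] e(3) D_def by simp
    have pw: "pair \<phi>1 w = D" unfolding w_def \<delta>_def D_def using pair_delta[OF e(1)] .
    have pw': "pair \<phi> w = 0" unfolding w_def \<delta>_def using pair_delta[OF e(1), of \<phi>] P3 by simp
    define c where "c = pair \<phi>1 y / D"
    define z where "z = (\<lambda>v. y v - c * w v)"
    have pzg: "pair \<psi>' z = pair \<psi>' y - c * pair \<psi>' w" for \<psi>'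
      unfolding z_def using pair_diff[of \<psi>' y "\<lambda>v. c * w v"] pair_scale[of \<psi>' c w] by simp
    have pz1: "pair \<phi>1 z = 0" using pzg[of \<phi>1] pw D0 unfolding c_def by simp
    have pz: "pair \<phi> z = 0" using pzg[of \<phi>] pw' py by simp
    then have "pair \<phi>1 z + lam * pair \<phi>2 z = 0" unfolding \<phi>_def pair_lin .
    then have pz2: "pair \<phi>2 z = 0" using pz1 lam0 by simp
    have wsupp: "supp_in (C1 \<union> C2) w" unfolding w_def \<delta>_def by (rule d_delta_supp) (use e in auto)
    have zsupp: "supp_in (C1 \<union> C2) z" using y wsupp unfolding z_def supp_in_def by auto
    define z1 where "z1 = (\<lambda>v. if v \<in> C1 then z v else 0)"
    define z2 where "z2 = (\<lambda>v. z v - z1 v)"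
    have "pair \<phi>1 z1 = 0" unfolding z1_def pair_restrict[OF s1] by (rule pz1)
    moreover have "supp_in C1 z1" unfolding z1_def supp_in_def by auto
    ultimately have z1i: "z1 \<in> img S" using T1 unfolding Tree_def by blast
    have "pair \<phi>2 z1 = 0" unfolding z1_def by (rule pair_restrict0[OF s2 disj])
    then have "pair \<phi>2 z2 = 0" unfolding z2_def pair_diff pz2 by simp
    moreover have "supp_in C2 z2" using zsupp unfolding z2_def z1_def supp_in_def by auto
    ultimately have z2i: "z2 \<in> img S" using T2 unfolding Tree_def by blast
    have "(\<lambda>v. z1 v + z2 v) \<in> img S" by (rule img_add[OF z1i z2i])
    moreover have "(\<lambda>v. z1 v + z2 v) = z" unfolding z2_def by simp
    ultimately have zi: "z \<in> img (insert e S)" using img_mono[of z S "insert e S"] by auto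
    have "w \<in> img (insert e S)" unfolding w_def \<delta>_def by (rule img_delta) simp
    then have "(\<lambda>v. c * w v) \<in> img (insert e S)" by (rule img_scale)
    from img_add[OF zi this] have "(\<lambda>v. z v + c * w v) \<in> img (insert e S)" .
    moreover have "(\<lambda>v. z v + c * w v) = y" unfolding z_def by simp
    ultimately show "y \<in> img (insert e S)" by simp
  qed
  have "Tree (insert e S) (C1 \<union> C2) \<phi>" unfolding Tree_def using P1 P2 P3 P4 by blast
  then show ?thesis by blast
qed



definition Inv :: "'e set \<Rightarrow> ('e,'k::field) ratfun itself \<Rightarrow> bool" where
  "Inv S K \<longleftrightarrow> (\<forall>C\<in>comps S. fval S C \<ge> -1 \<and> (fval S C \<ge> 0 \<longrightarrow> Full S C K)
      \<and> (fval S C = -1 \<longrightarrow> (\<exists>\<phi>::'v \<Rightarrow> ('e,'k) ratfun. Tree S C \<phi>)))"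

lemma comp_in_comps: "v \<in> verts G \<Longrightarrow> comp S v \<in> comps S"
  unfolding comps_def by blast

lemma pair_neg: "pair \<phi> (\<lambda>v. - y v) = - pair \<phi> y"
  unfolding pair_def by (simp add: sum_negf)

lemma neg_delta_img:
  fixes K :: "('e,'k::field) ratfun itself"
  assumes I: "Inv S K" and S: "S \<subseteq> arcs G" and e: "e \<in> arcs G" "e \<notin> S"
  shows "((\<lambda>v. - twisted_d G (\<lambda>e'. if e' = e then 1 else (0::('e,'k) ratfun)) v) \<in> img S)
     \<longleftrightarrow> (fval S (comp S (tail G e)) \<ge> 0 \<and> fval S (comp S (head G e)) \<ge> 0)"
proof
  let ?y = "\<lambda>v. - twisted_d G (\<lambda>e'. if e' = e then 1 else (0::('e,'k) ratfun)) v"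
  have Ca: "comp S (tail G e) \<in> comps S" and Cb: "comp S (head G e) \<in> comps S"
    using e by (auto intro: comp_in_comps)
  have no_tree: False if y: "?y \<in> img S" and T: "Tree S C \<phi>" and ends: "tail G e \<in> C \<or> head G e \<in> C"
    for C and \<phi> :: "'v \<Rightarrow> ('e,'k) ratfun"
  proof -
    obtain x where x: "supp_in S x" "?y = twisted_d G x" using y unfolding img_def by blast
    have "pair \<phi> ?y = 0" using Tree_annih[OF T x(1)] x(2) by simp
    moreover have "pair \<phi> ?y = - (\<phi> (head G e) - psi e * \<phi> (tail G e))"
      using pair_neg[of \<phi> "twisted_d G (\<lambda>e'. if e' = e then 1 else (0::('e,'k) ratfun))"] pair_delta[OF e(1), of \<phi>]
      by simp
    ultimately show False using Tree_nonvan[OF T e(2) ends] by simp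
  qed
  show "fval S (comp S (tail G e)) \<ge> 0 \<and> fval S (comp S (head G e)) \<ge> 0" if y: "?y \<in> img S"
  proof (rule ccontr)
    assume "\<not> ?thesis"
    then consider "fval S (comp S (tail G e)) = -1" | "fval S (comp S (head G e)) = -1"
      using I Ca Cb unfolding Inv_def by force
    then show False
    proof cases
      case 1
      then obtain \<phi> :: "'v \<Rightarrow> ('e,'k) ratfun" where "Tree S (comp S (tail G e)) \<phi>"
        using I Ca unfolding Inv_def by blast
      then show False using no_tree[OF y] comp_refl by blast
    next
      case 2
      then obtain \<phi> :: "'v \<Rightarrow> ('e,'k) ratfun" where "Tree S (comp S (head G e)) \<phi>"
        using I Cb unfolding Inv_def by blast
      then show False using no_tree[OF y] comp_refl by blast
    qed
  qed
  show "?y \<in> img S" if f: "fval S (comp S (tail G e)) \<ge> 0 \<and> fval S (comp S (head G e)) \<ge> 0"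
  proof -
    have Fa: "Full S (comp S (tail G e)) K" and Fb: "Full S (comp S (head G e)) K"
      using I Ca Cb f unfolding Inv_def by auto
    define y1 where "y1 = (\<lambda>v. if v = tail G e then psi e else (0::('e,'k) ratfun))"
    define y2 where "y2 = (\<lambda>v. if v = head G e then -1 else (0::('e,'k) ratfun))"
    have "y1 \<in> img S" using Fa unfolding Full_def y1_def supp_in_def by auto
    moreover have "y2 \<in> img S" using Fb unfolding Full_def y2_def supp_in_def by auto
    ultimately have "(\<lambda>v. y1 v + y2 v) \<in> img S" by (rule img_add)
    moreover have "(\<lambda>v. y1 v + y2 v) = ?y"
      unfolding y1_def y2_def by (auto simp: fun_eq_iff d_delta[OF e(1)])
    ultimately show ?thesis by simp
  qed
qed


lemma finite_comps: "finite (comps S)"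
  unfolding comps_def by simp

lemma fval_insert:
  assumes "e \<notin> S" "S \<subseteq> arcs G"
  shows "fval (insert e S) C = fval S C + (if tail G e \<in> C then 1 else 0)"
proof -
  have fin: "finite {e'\<in>S. tail G e' \<in> C}" using assms(2) finite_arcs by (auto intro: finite_subset)
  show ?thesis
  proof (cases "tail G e \<in> C")
    case True
    then have "{e'\<in>insert e S. tail G e' \<in> C} = insert e {e'\<in>S. tail G e' \<in> C}" by auto
    then show ?thesis using True assms(1) fin unfolding fval_def by simp
  next
    case False
    then have "{e'\<in>insert e S. tail G e' \<in> C} = {e'\<in>S. tail G e' \<in> C}" by auto
    then show ?thesis using False unfolding fval_def by simp
  qed
qed

lemma in_comp_iff: "u \<in> comp S v \<longleftrightarrow> comp S u = comp S v"
  by (metis comp_eq comp_refl)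

lemma step_same:
  fixes K :: "('e,'k::field) ratfun itself"
  assumes I: "Inv S K" and S: "S \<subseteq> arcs G" and e: "e \<in> arcs G" "e \<notin> S"
    and same: "head G e \<in> comp S (tail G e)"
  shows "Inv (insert e S) K \<and> rhoS (insert e S) = rhoS S + (if fval S (comp S (tail G e)) \<ge> 0 then 1 else 0)"
proof -
  define Ca where "Ca = comp S (tail G e)"
  have hCa: "comp S (head G e) = Ca" using same comp_eq unfolding Ca_def by blast
  have cs: "comp (insert e S) v = comp S v" for v
  proof -
    have "tail G e \<in> comp S v \<Longrightarrow> comp S (head G e) = comp S v"
      using hCa comp_eq unfolding Ca_def by metis
    moreover have "head G e \<in> comp S v \<Longrightarrow> comp S (tail G e) = comp S v"
      using hCa comp_eq unfolding Ca_def by metis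
    ultimately show ?thesis unfolding comp_insert by auto
  qed
  have cps: "comps (insert e S) = comps S" unfolding comps_def cs by simp
  have CaIn: "Ca \<in> comps S" unfolding Ca_def using e by (auto intro: comp_in_comps)
  have tailC: "tail G e \<in> C \<longleftrightarrow> C = Ca" if CC: "C \<in> comps S" for C
  proof -
    obtain v where "C = comp S v" using CC unfolding comps_def by blast
    then show ?thesis unfolding Ca_def using in_comp_iff by metis
  qed
  have headC: "head G e \<in> C \<longleftrightarrow> C = Ca" if CC: "C \<in> comps S" for C
  proof -
    obtain v where "C = comp S v" using CC unfolding comps_def by blast
    then show ?thesis using hCa in_comp_iff by metis
  qed
  have fv: "fval (insert e S) C = fval S C + (if C = Ca then 1 else 0)" if "C \<in> comps S" for C
    using fval_insert[OF e(2) S] tailC[OF that] by simp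
  have Inv': "Inv (insert e S) K"
    unfolding Inv_def cps
  proof
    fix C assume C: "C \<in> comps S"
    have fC: "fval S C \<ge> -1" "fval S C \<ge> 0 \<longrightarrow> Full S C K" "fval S C = -1 \<longrightarrow> (\<exists>\<phi>::'v \<Rightarrow> ('e,'k) ratfun. Tree S C \<phi>)"
      using I C unfolding Inv_def by auto
    show "fval (insert e S) C \<ge> -1 \<and> (fval (insert e S) C \<ge> 0 \<longrightarrow> Full (insert e S) C K)
      \<and> (fval (insert e S) C = -1 \<longrightarrow> (\<exists>\<phi>::'v \<Rightarrow> ('e,'k) ratfun. Tree (insert e S) C \<phi>))"
    proof (cases "C = Ca")
      case True
      have "Full (insert e S) C K"
      proof (cases "fval S C \<ge> 0")
        case True
        then show ?thesis using fC Full_mono[of S C K "insert e S"] by auto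
      next
        case False
        then obtain \<phi> :: "'v \<Rightarrow> ('e,'k) ratfun" where T: "Tree S C \<phi>" using fC by auto
        have "tail G e \<in> C" "head G e \<in> C" using tailC headC C True by auto
        then have "Full (insert e S) (C \<union> {}) K"
          using Full_merge_tree[OF T Full_empty e] by auto
        then show ?thesis by simp
      qed
      then show ?thesis using fv[OF C] True fC by auto
    next
      case False
      have nt: "tail G e \<notin> C" "head G e \<notin> C" using tailC headC C False by auto
      show ?thesis using fv[OF C] False fC Full_mono[of S C K "insert e S"] Tree_mono[OF _ nt] by auto
    qed
  qed
  have "rhoS (insert e S) = (\<Sum>C\<in>comps S. max 0 (fval S C) + (if C = Ca then (if fval S Ca \<ge> 0 then 1 else 0) else 0))"
    unfolding rhoS_def cps
  proof (rule sum.cong[OF refl])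
    fix C assume C: "C \<in> comps S"
    have "fval S C \<ge> -1" using I C unfolding Inv_def by auto
    then show "max 0 (fval (insert e S) C) = max 0 (fval S C) + (if C = Ca then (if fval S Ca \<ge> 0 then 1 else 0) else 0)"
      using fv[OF C] by auto
  qed
  also have "\<dots> = rhoS S + (if fval S Ca \<ge> 0 then 1 else 0)"
    unfolding rhoS_def sum.distrib using CaIn finite_comps by (simp add: sum.delta')
  finally show ?thesis using Inv' unfolding Ca_def by simp
qed


lemma step_diff:
  fixes K :: "('e,'k::field) ratfun itself"
  assumes I: "Inv S K" and S: "S \<subseteq> arcs G" and e: "e \<in> arcs G" "e \<notin> S"
    and diff: "head G e \<notin> comp S (tail G e)"
  shows "Inv (insert e S) K \<and> rhoS (insert e S) = rhoS S +
     (if fval S (comp S (tail G e)) \<ge> 0 \<and> fval S (comp S (head G e)) \<ge> 0 then 1 else 0)"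
proof -
  define Ca where "Ca = comp S (tail G e)"
  define Cb where "Cb = comp S (head G e)"
  have tV: "tail G e \<in> verts G" and hV: "head G e \<in> verts G" using e by auto
  have tCa: "tail G e \<in> Ca" and hCb: "head G e \<in> Cb" unfolding Ca_def Cb_def by simp_all
  have hCa: "head G e \<notin> Ca" using diff unfolding Ca_def .
  have neq: "Ca \<noteq> Cb" using hCa hCb by blast
  have disj: "Ca \<inter> Cb = {}" using comp_disj neq unfolding Ca_def Cb_def by blast
  have tCb: "tail G e \<notin> Cb" using disj tCa by blast
  have CaIn: "Ca \<in> comps S" and CbIn: "Cb \<in> comps S" unfolding Ca_def Cb_def using tV hV by (auto intro: comp_in_comps)
  have finCa: "finite Ca" and finCb: "finite Cb" unfolding Ca_def Cb_def using finite_comp[OF S] tV hV by auto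
  have tmem: "tail G e \<in> comp S v \<longleftrightarrow> comp S v = Ca" for v unfolding Ca_def using in_comp_iff by metis
  have hmem: "head G e \<in> comp S v \<longleftrightarrow> comp S v = Cb" for v unfolding Cb_def using in_comp_iff by metis
  have cs: "comp (insert e S) v = (if comp S v = Ca \<or> comp S v = Cb then Ca \<union> Cb else comp S v)" for v
  proof -
    have "comp (insert e S) v = comp S v \<union> (if comp S v = Ca then Cb else {}) \<union> (if comp S v = Cb then Ca else {})"
      unfolding comp_insert tmem hmem Ca_def[symmetric] Cb_def[symmetric] ..
    then show ?thesis using neq by auto
  qed
  have cps: "comps (insert e S) = insert (Ca \<union> Cb) (comps S - {Ca, Cb})"
  proof
    show "comps (insert e S) \<subseteq> insert (Ca \<union> Cb) (comps S - {Ca, Cb})"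
    proof
      fix X assume "X \<in> comps (insert e S)"
      then obtain v where v: "v \<in> verts G" "X = comp (insert e S) v" unfolding comps_def by blast
      show "X \<in> insert (Ca \<union> Cb) (comps S - {Ca, Cb})"
        using v comp_in_comps[OF v(1), of S] unfolding cs by auto
    qed
  next
    show "insert (Ca \<union> Cb) (comps S - {Ca, Cb}) \<subseteq> comps (insert e S)"
    proof
      fix X assume X: "X \<in> insert (Ca \<union> Cb) (comps S - {Ca, Cb})"
      show "X \<in> comps (insert e S)"
      proof (cases "X = Ca \<union> Cb")
        case True
        have "comp (insert e S) (tail G e) = Ca \<union> Cb" unfolding cs Ca_def by simp
        then show ?thesis using True tV unfolding comps_def by blast
      next
        case False
        then obtain v where v: "v \<in> verts G" "X = comp S v" "comp S v \<noteq> Ca" "comp S v \<noteq> Cb"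
          using X unfolding comps_def by blast
        then have "comp (insert e S) v = X" unfolding cs by simp
        then show ?thesis using v(1) unfolding comps_def by blast
      qed
    qed
  qed
  have notin: "Ca \<union> Cb \<notin> comps S - {Ca, Cb}"
  proof
    assume "Ca \<union> Cb \<in> comps S - {Ca, Cb}"
    then obtain v where "Ca \<union> Cb = comp S v" unfolding comps_def by blast
    then have "tail G e \<in> comp S v" using tCa by blast
    then have "comp S v = Ca" using tmem by blast
    then show False using \<open>Ca \<union> Cb = comp S v\<close> hCb hCa by blast
  qed
  have rest: "tail G e \<notin> C" "head G e \<notin> C" if CC: "C \<in> comps S - {Ca, Cb}" for C
  proof -
    obtain v where "C = comp S v" "C \<noteq> Ca" "C \<noteq> Cb" using CC unfolding comps_def by blast
    then show "tail G e \<notin> C" "head G e \<notin> C" using tmem hmem by blast+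
  qed
  have fv_rest: "fval (insert e S) C = fval S C" if "C \<in> comps S - {Ca, Cb}" for C
    using fval_insert[OF e(2) S] rest[OF that] by simp
  have fv_new: "fval (insert e S) (Ca \<union> Cb) = fval S Ca + fval S Cb + 1"
  proof -
    have finE: "finite {e'\<in>S. tail G e' \<in> X}" for X using S finite_arcs by (auto intro: finite_subset)
    have "{e'\<in>S. tail G e' \<in> Ca \<union> Cb} = {e'\<in>S. tail G e' \<in> Ca} \<union> {e'\<in>S. tail G e' \<in> Cb}" by auto
    moreover have "{e'\<in>S. tail G e' \<in> Ca} \<inter> {e'\<in>S. tail G e' \<in> Cb} = {}" using disj by auto
    ultimately have "card {e'\<in>S. tail G e' \<in> Ca \<union> Cb} = card {e'\<in>S. tail G e' \<in> Ca} + card {e'\<in>S. tail G e' \<in> Cb}"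
      using finE by (simp add: card_Un_disjoint)
    moreover have "card (Ca \<union> Cb) = card Ca + card Cb" using finCa finCb disj by (simp add: card_Un_disjoint)
    ultimately have "fval S (Ca \<union> Cb) = fval S Ca + fval S Cb" unfolding fval_def by simp
    then show ?thesis using fval_insert[OF e(2) S, of "Ca \<union> Cb"] tCa by simp
  qed
  have Ia: "fval S Ca \<ge> -1" "fval S Ca \<ge> 0 \<longrightarrow> Full S Ca K" "fval S Ca = -1 \<longrightarrow> (\<exists>\<phi>::'v \<Rightarrow> ('e,'k) ratfun. Tree S Ca \<phi>)"
    using I CaIn unfolding Inv_def by auto
  have Ib: "fval S Cb \<ge> -1" "fval S Cb \<ge> 0 \<longrightarrow> Full S Cb K" "fval S Cb = -1 \<longrightarrow> (\<exists>\<phi>::'v \<Rightarrow> ('e,'k) ratfun. Tree S Cb \<phi>)"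
    using I CbIn unfolding Inv_def by auto
  have newC: "fval (insert e S) (Ca \<union> Cb) \<ge> -1 \<and> (fval (insert e S) (Ca \<union> Cb) \<ge> 0 \<longrightarrow> Full (insert e S) (Ca \<union> Cb) K)
      \<and> (fval (insert e S) (Ca \<union> Cb) = -1 \<longrightarrow> (\<exists>\<phi>::'v \<Rightarrow> ('e,'k) ratfun. Tree (insert e S) (Ca \<union> Cb) \<phi>))"
  proof (cases "fval S Ca \<ge> 0")
    case fa: True
    show ?thesis
    proof (cases "fval S Cb \<ge> 0")
      case True
      have "Full S (Ca \<union> Cb) K" using Full_union Ia Ib fa True by blast
      then have "Full (insert e S) (Ca \<union> Cb) K" using Full_mono by blast
      then show ?thesis using fv_new fa True by simp
    next
      case False
      then obtain \<phi> :: "'v \<Rightarrow> ('e,'k) ratfun" where T: "Tree S Cb \<phi>" using Ib by auto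
      have "Full (insert e S) (Cb \<union> Ca) K"
        using Full_merge_tree[OF T _ e] Ia fa tCa hCb by blast
      then have "Full (insert e S) (Ca \<union> Cb) K" by (simp add: Un_commute)
      then show ?thesis using fv_new fa Ib False by simp
    qed
  next
    case fa: False
    then obtain \<phi>1 :: "'v \<Rightarrow> ('e,'k) ratfun" where T1: "Tree S Ca \<phi>1" using Ia by auto
    show ?thesis
    proof (cases "fval S Cb \<ge> 0")
      case True
      have "Full (insert e S) (Ca \<union> Cb) K"
        using Full_merge_tree[OF T1 _ e] Ib True tCa hCb by blast
      then show ?thesis using fv_new fa Ia True by simp
    next
      case False
      then obtain \<phi>2 :: "'v \<Rightarrow> ('e,'k) ratfun" where T2: "Tree S Cb \<phi>2" using Ib by auto
      have "\<exists>\<phi>::'v \<Rightarrow> ('e,'k) ratfun. Tree (insert e S) (Ca \<union> Cb) \<phi>"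
        by (rule Tree_merge[OF T1 T2 disj e tCa hCb])
      then show ?thesis using fv_new fa Ia Ib False by simp
    qed
  qed
  have restI: "\<forall>C\<in>comps S - {Ca, Cb}. fval (insert e S) C \<ge> -1 \<and> (fval (insert e S) C \<ge> 0 \<longrightarrow> Full (insert e S) C K)
      \<and> (fval (insert e S) C = -1 \<longrightarrow> (\<exists>\<phi>::'v \<Rightarrow> ('e,'k) ratfun. Tree (insert e S) C \<phi>))"
  proof
    fix C assume C: "C \<in> comps S - {Ca, Cb}"
    have fC: "fval S C \<ge> -1" "fval S C \<ge> 0 \<longrightarrow> Full S C K" "fval S C = -1 \<longrightarrow> (\<exists>\<phi>::'v \<Rightarrow> ('e,'k) ratfun. Tree S C \<phi>)"
      using I C unfolding Inv_def by auto
    show "fval (insert e S) C \<ge> -1 \<and> (fval (insert e S) C \<ge> 0 \<longrightarrow> Full (insert e S) C K)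
      \<and> (fval (insert e S) C = -1 \<longrightarrow> (\<exists>\<phi>::'v \<Rightarrow> ('e,'k) ratfun. Tree (insert e S) C \<phi>))"
      using fv_rest[OF C] fC Full_mono[of S C K "insert e S"] Tree_mono[OF _ rest[OF C]] by auto
  qed
  have Inv': "Inv (insert e S) K"
    unfolding Inv_def cps using newC restI by blast
  have "rhoS (insert e S) = max 0 (fval (insert e S) (Ca \<union> Cb)) + (\<Sum>C\<in>comps S - {Ca, Cb}. max 0 (fval (insert e S) C))"
    unfolding rhoS_def cps using notin finite_comps by simp
  also have "(\<Sum>C\<in>comps S - {Ca, Cb}. max 0 (fval (insert e S) C)) = (\<Sum>C\<in>comps S - {Ca, Cb}. max 0 (fval S C))"
    using fv_rest by simp
  also have "rhoS S = max 0 (fval S Ca) + max 0 (fval S Cb) + (\<Sum>C\<in>comps S - {Ca, Cb}. max 0 (fval S C))"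
  proof -
    have "rhoS S = max 0 (fval S Ca) + (\<Sum>C\<in>comps S - {Ca}. max 0 (fval S C))"
      unfolding rhoS_def using CaIn finite_comps by (simp add: sum.remove)
    also have "(\<Sum>C\<in>comps S - {Ca}. max 0 (fval S C)) = max 0 (fval S Cb) + (\<Sum>C\<in>comps S - {Ca} - {Cb}. max 0 (fval S C))"
      using sum.remove[of "comps S - {Ca}" Cb "\<lambda>C. max 0 (fval S C)"] CbIn neq finite_comps by simp
    also have "comps S - {Ca} - {Cb} = comps S - {Ca, Cb}" by auto
    finally show ?thesis by simp
  qed
  ultimately have "rhoS (insert e S) = rhoS S + (if fval S Ca \<ge> 0 \<and> fval S Cb \<ge> 0 then 1 else 0)"
    using fv_new Ia(1) Ib(1) by auto
  then show ?thesis using Inv' unfolding Ca_def Cb_def by simp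
qed


definition Ksub :: "'e set \<Rightarrow> ('e \<Rightarrow> ('e,'k::field) ratfun) set" where
  "Ksub S = {x. supp_in S x \<and> (\<forall>v\<in>verts G. twisted_d G x v = 0)}"

lemma d_outside: "v \<notin> verts G \<Longrightarrow> twisted_d G x v = 0"
  unfolding twisted_d_def d_head_def d_tail_def
proof -
  assume v: "v \<notin> verts G"
  then have h: "{e \<in> arcs G. head G e = v} = {}" "{e \<in> arcs G. tail G e = v} = {}" by auto
  show "sum x {e \<in> arcs G. head G e = v} - (\<Sum>e\<in>{e \<in> arcs G. tail G e = v}. psi e * x e) = 0"
    by (subst h(1), subst h(2)) simp
qed

lemma Ksub_subspace: "V.subspace (Ksub S :: ('e \<Rightarrow> ('e,'k::field) ratfun) set)"
proof (rule V.subspaceI)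
  have z: "(0::'e \<Rightarrow> ('e,'k) ratfun) = (\<lambda>e. 0)" by (simp add: zero_fun_def)
  show "(0::'e \<Rightarrow> ('e,'k) ratfun) \<in> Ksub S"
    unfolding Ksub_def supp_in_def z by (simp add: d_zero)
next
  fix x y :: "'e \<Rightarrow> ('e,'k) ratfun" assume x: "x \<in> Ksub S" and y: "y \<in> Ksub S"
  have "x + y = (\<lambda>e. x e + y e)" by (simp add: fun_eq_iff)
  then show "x + y \<in> Ksub S" using x y unfolding Ksub_def supp_in_def by (simp add: d_add)
next
  fix c :: "('e,'k) ratfun" and x :: "'e \<Rightarrow> ('e,'k) ratfun" assume x: "x \<in> Ksub S"
  then show "(\<lambda>e. c * x e) \<in> Ksub S" unfolding Ksub_def supp_in_def by (simp add: d_scale)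
qed

lemma Ksub_mono: "S \<subseteq> T \<Longrightarrow> Ksub S \<subseteq> Ksub T"
  unfolding Ksub_def supp_in_def by auto

lemma Ksub_drop: "x \<in> Ksub (insert e S) \<Longrightarrow> x e = 0 \<Longrightarrow> x \<in> Ksub S"
  unfolding Ksub_def supp_in_def by auto

lemma ex_iff:
  assumes e: "e \<in> arcs G" "e \<notin> S"
  shows "(\<exists>x\<in>Ksub (insert e S). x e = (1::('e,'k::field) ratfun)) \<longleftrightarrow>
    (\<lambda>v. - twisted_d G (\<lambda>e'. if e' = e then 1 else (0::('e,'k) ratfun)) v) \<in> img S"
proof
  let ?\<delta> = "\<lambda>e'. if e' = e then 1 else (0::('e,'k) ratfun)"
  assume "\<exists>x\<in>Ksub (insert e S). x e = (1::('e,'k) ratfun)"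
  then obtain x :: "'e \<Rightarrow> ('e,'k) ratfun" where x: "x \<in> Ksub (insert e S)" "x e = 1" by blast
  define x' where "x' = (\<lambda>e'. x e' - ?\<delta> e')"
  have "supp_in S x'" using x unfolding x'_def Ksub_def supp_in_def by auto
  moreover have "(\<lambda>v. - twisted_d G ?\<delta> v) = twisted_d G x'"
  proof
    fix v show "- twisted_d G ?\<delta> v = twisted_d G x' v"
    proof (cases "v \<in> verts G")
      case True
      then show ?thesis using x unfolding x'_def d_diff Ksub_def by simp
    next
      case False
      then show ?thesis by (simp add: d_outside)
    qed
  qed
  ultimately show "(\<lambda>v. - twisted_d G ?\<delta> v) \<in> img S" unfolding img_def by blast
next
  let ?\<delta> = "\<lambda>e'. if e' = e then 1 else (0::('e,'k) ratfun)"
  assume "(\<lambda>v. - twisted_d G ?\<delta> v) \<in> img S"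
  then obtain x' :: "'e \<Rightarrow> ('e,'k) ratfun" where x': "supp_in S x'" "(\<lambda>v. - twisted_d G ?\<delta> v) = twisted_d G x'" unfolding img_def by blast
  define x where "x = (\<lambda>e'. ?\<delta> e' + x' e')"
  have "x e = 1" using x'(1) e(2) unfolding x_def supp_in_def by simp
  moreover have "x \<in> Ksub (insert e S)"
    unfolding Ksub_def
  proof (intro CollectI conjI ballI)
    show "supp_in (insert e S) x" using x'(1) unfolding x_def supp_in_def by auto
    fix v
    have "twisted_d G x' v = - twisted_d G ?\<delta> v" using fun_cong[OF x'(2), of v] by simp
    then show "twisted_d G x v = 0" unfolding x_def d_add by simp
  qed
  ultimately show "\<exists>x\<in>Ksub (insert e S). x e = (1::('e,'k) ratfun)" by blast
qed

lemma Ksub_no_new: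
  assumes "\<not> (\<exists>x\<in>Ksub (insert e S). x e = (1::('e,'k::field) ratfun))"
  shows "Ksub (insert e S) = (Ksub S :: ('e \<Rightarrow> ('e,'k) ratfun) set)"
proof
  show "Ksub S \<subseteq> Ksub (insert e S)" by (rule Ksub_mono) auto
  show "Ksub (insert e S) \<subseteq> (Ksub S :: ('e \<Rightarrow> ('e,'k) ratfun) set)"
  proof
    fix x :: "'e \<Rightarrow> ('e,'k) ratfun" assume x: "x \<in> Ksub (insert e S)"
    have "x e = 0"
    proof (rule ccontr)
      assume ne: "x e \<noteq> 0"
      have sc: "(\<lambda>e'. (1 / x e) * x e') \<in> Ksub (insert e S)"
        by (rule V.subspace_scale[OF Ksub_subspace x])
      have "(1 / x e) * x e = 1" using ne by simp
      then have "\<exists>y\<in>Ksub (insert e S). y e = (1::('e,'k) ratfun)"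
        using sc by (intro bexI[of _ "\<lambda>e'. (1 / x e) * x e'"]) simp_all
      then show False using assms by simp
    qed
    then show "x \<in> Ksub S" using Ksub_drop x by blast
  qed
qed


lemma mono00: "mono 0 0 = (1::('e,'k::field) ratfun)"
  unfolding mono_def by (simp add: One_fract_def)

lemma main_ind:
  fixes K :: "('e,'k::field) ratfun itself"
  assumes "S \<subseteq> arcs G"
  shows "Inv S K \<and> (\<exists>B::('e \<Rightarrow> ('e,'k) ratfun) set. finite B \<and> B \<subseteq> Ksub S \<and> V.independent B
            \<and> Ksub S \<subseteq> V.span B \<and> int (card B) = rhoS S)"
proof -
  have fin: "finite S" using assms finite_arcs by (rule finite_subset)
  show ?thesis using fin assms
  proof (induction rule: finite_subset_induct')
    case empty
    have c0: "comp {} v = {v}" for v unfolding comp_def rel_def by simp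
    have cps0: "comps {} = (\<lambda>v. {v}) ` verts G" unfolding comps_def c0 by simp
    have fv0: "fval {} {v} = -1" for v unfolding fval_def by simp
    have I0: "Inv {} K" unfolding Inv_def cps0
    proof
      fix C assume "C \<in> (\<lambda>v. {v}) ` verts G"
      then obtain v where v: "v \<in> verts G" "C = {v}" by blast
      define \<phi> where "\<phi> = (\<lambda>u. if u = v then 1 else (0::('e,'k) ratfun))"
      have "Tree {} {v} \<phi>"
        unfolding Tree_def
      proof (intro conjI)
        show "supp_in {v} \<phi>" unfolding supp_in_def \<phi>_def by simp
        show "\<forall>u\<in>{v}. \<exists>a b. \<phi> u = mono a b \<and> (\<forall>e'. e' \<notin> {} \<longrightarrow> Poly_Mapping.lookup a e' = 0 \<and> Poly_Mapping.lookup b e' = 0)"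
          unfolding \<phi>_def using mono00 by (metis lookup_zero singletonD)
        show "\<forall>e\<in>{}. \<phi> (head G e) = psi e * \<phi> (tail G e)" by simp
        show "\<forall>y. supp_in {v} y \<longrightarrow> pair \<phi> y = 0 \<longrightarrow> y \<in> img {}"
        proof (intro allI impI)
          fix y :: "'v \<Rightarrow> ('e,'k) ratfun" assume y: "supp_in {v} y" and p: "pair \<phi> y = 0"
          have "pair \<phi> y = (\<Sum>u\<in>verts G. if u = v then y u else 0)"
            unfolding pair_def \<phi>_def by (rule sum.cong) auto
          also have "\<dots> = y v" using v(1) by (simp add: sum.delta)
          finally have "y v = 0" using p by simp
          then have "y = (\<lambda>u. 0)" using y unfolding supp_in_def by auto
          then show "y \<in> img {}" using img_zero by simp
        qed
      qed
      then show "fval {} C \<ge> -1 \<and> (fval {} C \<ge> 0 \<longrightarrow> Full {} C K) \<and> (fval {} C = -1 \<longrightarrow> (\<exists>\<phi>::'v \<Rightarrow> ('e,'k) ratfun. Tree {} C \<phi>))"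
        using v(2) fv0 by auto
    qed
    have r0: "rhoS {} = 0" unfolding rhoS_def cps0 by (rule sum.neutral) (auto simp: fv0)
    have K0: "Ksub {} \<subseteq> V.span ({}::('e \<Rightarrow> ('e,'k) ratfun) set)"
    proof
      fix x :: "'e \<Rightarrow> ('e,'k) ratfun" assume "x \<in> Ksub {}"
      then have "x = 0" unfolding Ksub_def supp_in_def by (auto simp: fun_eq_iff)
      then show "x \<in> V.span {}" by simp
    qed
    show ?case using I0 r0 K0 by (intro conjI exI[of _ "{}"]) (auto simp: V.independent_empty)
  next
    case (insert a F)
    from insert.IH obtain B :: "('e \<Rightarrow> ('e,'k) ratfun) set" where IF: "Inv F K"
      and B: "finite B" "B \<subseteq> Ksub F" "V.independent B" "Ksub F \<subseteq> V.span B" "int (card B) = rhoS F"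
      by blast
    define cond where "cond = (fval F (comp F (tail G a)) \<ge> 0 \<and> fval F (comp F (head G a)) \<ge> 0)"
    have st: "Inv (insert a F) K \<and> rhoS (insert a F) = rhoS F + (if cond then 1 else 0)"
    proof (cases "head G a \<in> comp F (tail G a)")
      case True
      then have "comp F (head G a) = comp F (tail G a)" by (rule comp_eq)
      then show ?thesis using step_same[OF IF insert.hyps(3) insert.hyps(2) insert.hyps(4) True] unfolding cond_def by simp
    next
      case False
      then show ?thesis using step_diff[OF IF insert.hyps(3) insert.hyps(2) insert.hyps(4) False] unfolding cond_def by simp
    qed
    have ci: "cond \<longleftrightarrow> (\<exists>x\<in>Ksub (insert a F). x a = (1::('e,'k) ratfun))"
      unfolding cond_def ex_iff[OF insert.hyps(2) insert.hyps(4)] neg_delta_img[OF IF insert.hyps(3) insert.hyps(2) insert.hyps(4)] ..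
    have sub: "Ksub F \<subseteq> (Ksub (insert a F) :: ('e \<Rightarrow> ('e,'k) ratfun) set)" by (rule Ksub_mono) auto
    show ?case
    proof (cases cond)
      case True
      then obtain x0 :: "'e \<Rightarrow> ('e,'k) ratfun" where x0: "x0 \<in> Ksub (insert a F)" "x0 a = 1" using ci by blast
      have spB: "V.span B \<subseteq> Ksub F" by (rule V.span_minimal[OF B(2) Ksub_subspace])
      have zeroF: "x a = 0" if "x \<in> Ksub F" for x :: "'e \<Rightarrow> ('e,'k) ratfun"
        using that insert.hyps(4) unfolding Ksub_def supp_in_def by auto
      have nsp: "x0 \<notin> V.span B" using spB zeroF x0(2) by force
      have nB: "x0 \<notin> B" using nsp V.span_base by metis
      have ind: "V.independent (insert x0 B)" by (simp add: V.independent_insert nB nsp B(3))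
      have card: "card (insert x0 B) = card B + 1" using B(1) nB by simp
      have span: "Ksub (insert a F) \<subseteq> V.span (insert x0 B)"
      proof
        fix y :: "'e \<Rightarrow> ('e,'k) ratfun" assume y: "y \<in> Ksub (insert a F)"
        define z where "z = y - (\<lambda>e. y a * x0 e)"
        have "(\<lambda>e. y a * x0 e) \<in> Ksub (insert a F)" by (rule V.subspace_scale[OF Ksub_subspace x0(1)])
        then have "z \<in> Ksub (insert a F)" unfolding z_def by (rule V.subspace_diff[OF Ksub_subspace y])
        moreover have "z a = 0" unfolding z_def using x0(2) by simp
        ultimately have "z \<in> Ksub F" by (rule Ksub_drop)
        then have "z \<in> V.span B" using B(4) by blast
        then show "y \<in> V.span (insert x0 B)" unfolding V.span_breakdown_eq z_def by blast
      qed
      show ?thesis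
        using st True ind card span B x0(1) sub by (intro conjI exI[of _ "insert x0 B"]) auto
    next
      case False
      then have eq: "Ksub (insert a F) = (Ksub F :: ('e \<Rightarrow> ('e,'k) ratfun) set)"
        using ci Ksub_no_new by blast
      show ?thesis using st False eq B by (intro conjI exI[of _ B]) auto
    qed
  qed
qed

lemma wfH: "wf_digraph (with_proj (mk_symmetric G))"
  by unfold_locales (auto simp: parcs_mk_symmetric)

lemma reach_iff:
  assumes "u \<in> verts G"
  shows "reachable (with_proj (mk_symmetric G)) u v \<longleftrightarrow> (u,v) \<in> (rel (arcs G))\<^sup>*"
proof -
  have ae: "arcs_ends (with_proj (mk_symmetric G)) = rel (arcs G)"
    by (simp add: parcs_mk_symmetric rel_def)
  have "(u,v) \<in> rtrancl_on (verts G) (rel (arcs G)) \<longleftrightarrow> (u,v) \<in> (rel (arcs G))\<^sup>*"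
  proof
    assume "(u,v) \<in> rtrancl_on (verts G) (rel (arcs G))"
    then show "(u,v) \<in> (rel (arcs G))\<^sup>*" by (rule rtrancl_on_rtranclI)
  next
    assume "(u,v) \<in> (rel (arcs G))\<^sup>*"
    then show "(u,v) \<in> rtrancl_on (verts G) (rel (arcs G))"
    proof (induction rule: rtrancl_induct)
      case base then show ?case using assms by simp
    next
      case (step y z)
      then have "z \<in> verts G" using rel_sub[of "arcs G"] by blast
      then show ?case using step rtrancl_on_into_rtrancl_on by metis
    qed
  qed
  then show ?thesis unfolding reachable_def ae by simp
qed

lemma components_eq: "components G = comps (arcs G)"
proof -
  have scc: "pre_digraph.scc_of (with_proj (mk_symmetric G)) u = comp (arcs G) u" if u: "u \<in> verts G" for u
  proof -
    have "reachable (with_proj (mk_symmetric G)) u v \<and> reachable (with_proj (mk_symmetric G)) v u \<longleftrightarrow> v \<in> comp (arcs G) u" for v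
    proof
      assume "reachable (with_proj (mk_symmetric G)) u v \<and> reachable (with_proj (mk_symmetric G)) v u"
      then show "v \<in> comp (arcs G) u" using reach_iff[OF u] unfolding comp_def by simp
    next
      assume v: "v \<in> comp (arcs G) u"
      then have vV: "v \<in> verts G" using comp_sub[of "arcs G" u] u by blast
      show "reachable (with_proj (mk_symmetric G)) u v \<and> reachable (with_proj (mk_symmetric G)) v u"
        using v reach_iff[OF u] reach_iff[OF vV] rt_sym unfolding comp_def by auto
    qed
    then show ?thesis unfolding pre_digraph.scc_of_def by auto
  qed
  show ?thesis
    unfolding components_def comps_def wf_digraph.sccs_verts_conv_scc_of[OF wfH]
    using scc by simp
qed

lemma rho_eq: "rho G = rhoS (arcs G)"
  unfolding rho_def rhoS_def components_eq
  by (rule sum.cong) (auto simp: h1_comp_def fval_def)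

end

theorem mainTheorem10:
  fixes G :: "('v, 'e::linorder) pre_digraph"
  assumes "fin_digraph G"
  shows "rho G = int (h1_twist_struct TYPE('k::field) G)"
proof -
  interpret T: tw G using assms by (simp add: tw_def)
  obtain B :: "('e \<Rightarrow> ('e,'k) ratfun) set" where
    B: "finite B" "B \<subseteq> T.Ksub (arcs G)" "V.independent B" "T.Ksub (arcs G) \<subseteq> V.span B" "int (card B) = T.rhoS (arcs G)"
    using T.main_ind[of "arcs G" "TYPE(('e,'k) ratfun)"] by blast
  have K: "twisted_kernel TYPE('k) G = T.Ksub (arcs G)"
    unfolding twisted_kernel_def T.Ksub_def supp_in_def by simp
  have "h1_twist_struct TYPE('k) G = card B"
    unfolding h1_twist_struct_def K by (rule V.dim_unique[OF B(2) B(4) B(3) refl])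
  then show ?thesis using B(5) T.rho_eq by simp
qed

end
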